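(* Let $(X,d)$ be a complete metric space, let $E,F:(0,\infty)\to\mathbb{R}$ be a compatible pair of functions, and let $T:X\to X$ satisfy: for all $x,y\in X$ with $Tx\neq Ty$, $F(d(Tx,Ty))\le E(d(x,y))$. Then $T$ is a CJMP-contraction, and hence $T$ is a Picard operator.
   Context: $(E,F)$ is a compatible pair of functions if: $(C_1)$ for $t,s\in(0,\infty)$, $t\le s$ implies $E(t)<F(s)$; and $(C_2)$ for every $t>0$, every sequence $(t_n)_{n\in\mathbb{N}}\subset(t,\infty)$ with $t_n\to t$, and every sequence $(s_n)_{n\in\mathbb{N}}$ with $t<s_n<t_n$ for all $n$, one has $\limsup_{n\to\infty}(F(s_n)-E(t_n))>0$. A map $T:X\to X$ is contractive if $d(Tx,Ty)<d(x,y)$ for all $x\neq y$. $T$ is a CJMP-contraction if it is contractive and for every $\varepsilon>0$ there exists $\delta>0$ such that for all $x,y\in X$, $\varepsilon<d(x,y)<\varepsilon+\delta$ implies $d(Tx,Ty)\le\varepsilon$. $T$ is a Picard operator if $T$ has a unique fixed point $u\in X$ and for every $x\in X$ the sequence $(T^nx)_{n\in\mathbb{N}}$ converges to $u$. *)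

theory Defs
  imports "HOL-Analysis.Analysis"
begin

text \<open>Compatible pair (E,F) of functions defined on (0,\<infinity>); we use functions real \<Rightarrow> real
  whose values are only ever inspected on positive arguments.\<close>
definition compatible_pair :: "(real \<Rightarrow> real) \<Rightarrow> (real \<Rightarrow> real) \<Rightarrow> bool" where
  "compatible_pair E F \<longleftrightarrow>
     (\<forall>t s. 0 < t \<and> 0 < s \<and> t \<le> s \<longrightarrow> E t < F s) \<and>
     (\<forall>t > 0. \<forall>tn sn :: nat \<Rightarrow> real.
        (\<forall>n. t < tn n) \<and> tn \<longlonglongrightarrow> t \<and> (\<forall>n. t < sn n \<and> sn n < tn n) \<longrightarrow>
        limsup (\<lambda>n. ereal (F (sn n) - E (tn n))) > 0)"

definition contractive :: "('a::metric_space \<Rightarrow> 'a) \<Rightarrow> bool" where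
  "contractive T \<longleftrightarrow> (\<forall>x y. x \<noteq> y \<longrightarrow> dist (T x) (T y) < dist x y)"

definition cjmp_contraction :: "('a::metric_space \<Rightarrow> 'a) \<Rightarrow> bool" where
  "cjmp_contraction T \<longleftrightarrow> contractive T \<and>
     (\<forall>\<epsilon>>0. \<exists>\<delta>>0. \<forall>x y. \<epsilon> < dist x y \<and> dist x y < \<epsilon> + \<delta> \<longrightarrow> dist (T x) (T y) \<le> \<epsilon>)"

definition picard_operator :: "('a::metric_space \<Rightarrow> 'a) \<Rightarrow> bool" where
  "picard_operator T \<longleftrightarrow> (\<exists>u. T u = u \<and> (\<forall>v. T v = v \<longrightarrow> v = u) \<and>
     (\<forall>x. (\<lambda>n. (T ^^ n) x) \<longlonglongrightarrow> u))"

end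

theory Submission
  imports Defs
begin

lemma contr_lemma:
  fixes T :: "'a::metric_space \<Rightarrow> 'a" and E F :: "real \<Rightarrow> real"
  assumes c: "compatible_pair E F"
    and h: "\<And>x y. T x \<noteq> T y \<Longrightarrow> F (dist (T x) (T y)) \<le> E (dist x y)"
  shows "contractive T"
  unfolding contractive_def
proof (intro allI impI)
  fix x y :: 'a assume xy: "x \<noteq> y"
  show "dist (T x) (T y) < dist x y"
  proof (cases "T x = T y")
    case True thus ?thesis using xy by simp
  next
    case False
    show ?thesis
    proof (rule ccontr)
      assume "\<not> ?thesis"
      hence le: "dist x y \<le> dist (T x) (T y)" by simp
      have "E (dist x y) < F (dist (T x) (T y))"
        using c le xy False unfolding compatible_pair_def by auto
      with h[OF False] show False by simp
    qed
  qed
qed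

lemma cjmp_lemma:
  fixes T :: "'a::metric_space \<Rightarrow> 'a" and E F :: "real \<Rightarrow> real"
  assumes c: "compatible_pair E F"
    and h: "\<And>x y. T x \<noteq> T y \<Longrightarrow> F (dist (T x) (T y)) \<le> E (dist x y)"
  shows "cjmp_contraction T"
proof -
  have ct: "contractive T" using contr_lemma[OF c h] .
  have "\<exists>\<delta>>0. \<forall>x y. \<epsilon> < dist x y \<and> dist x y < \<epsilon> + \<delta> \<longrightarrow> dist (T x) (T y) \<le> \<epsilon>"
    if ep: "\<epsilon> > 0" for \<epsilon>
  proof (rule ccontr)
    assume na: "\<not> ?thesis"
    have "\<exists>p. \<epsilon> < dist (fst p) (snd p) \<and> dist (fst p) (snd p) < \<epsilon> + inverse (real (Suc n))
        \<and> dist (T (fst p)) (T (snd p)) > \<epsilon>" for n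
    proof -
      have "inverse (real (Suc n)) > 0" by simp
      with na obtain x y where "\<epsilon> < dist x y \<and> dist x y < \<epsilon> + inverse (real (Suc n))"
        "\<not> dist (T x) (T y) \<le> \<epsilon>" by blast
      thus ?thesis by (intro exI[of _ "(x,y)"]) auto
    qed
    then obtain p where p: "\<And>n. \<epsilon> < dist (fst (p n)) (snd (p n)) \<and>
        dist (fst (p n)) (snd (p n)) < \<epsilon> + inverse (real (Suc n))
        \<and> dist (T (fst (p n))) (T (snd (p n))) > \<epsilon>" by metis
    define tn where "tn n = dist (fst (p n)) (snd (p n))" for n
    define sn where "sn n = dist (T (fst (p n))) (T (snd (p n)))" for n
    have tgt: "\<forall>n. \<epsilon> < tn n" using p tn_def by auto
    have lim: "tn \<longlonglongrightarrow> \<epsilon>"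
    proof (rule tendsto_sandwich[of "\<lambda>n. \<epsilon>" _ _ "\<lambda>n. \<epsilon> + inverse (real (Suc n))"])
      show "\<forall>\<^sub>F n in sequentially. \<epsilon> \<le> tn n" using tgt by (simp add: less_imp_le)
      show "\<forall>\<^sub>F n in sequentially. tn n \<le> \<epsilon> + inverse (real (Suc n))"
        using p tn_def by (simp add: less_imp_le)
    qed (simp_all only: LIMSEQ_inverse_real_of_nat_add tendsto_const)
    have ne: "T (fst (p n)) \<noteq> T (snd (p n))" for n using p[of n] ep by auto
    have xne: "fst (p n) \<noteq> snd (p n)" for n using p[of n] ep by auto
    have sl: "\<forall>n. \<epsilon> < sn n \<and> sn n < tn n"
      using p ct xne unfolding sn_def tn_def contractive_def by auto
    have "limsup (\<lambda>n. ereal (F (sn n) - E (tn n))) > 0"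
      using c ep tgt lim sl unfolding compatible_pair_def by blast
    moreover have "limsup (\<lambda>n. ereal (F (sn n) - E (tn n))) \<le> 0"
      by (rule Limsup_bounded) (use h ne in \<open>auto simp: sn_def tn_def\<close>)
    ultimately show False by simp
  qed
  thus ?thesis using ct unfolding cjmp_contraction_def by blast
qed


lemma iter_conv:
  fixes T :: "'a::complete_space \<Rightarrow> 'a"
  assumes cj: "cjmp_contraction T"
  shows "\<exists>u. T u = u \<and> (\<lambda>n. (T ^^ n) x0) \<longlonglongrightarrow> u"
proof -
  have ct: "contractive T" and mk: "\<And>\<epsilon>. \<epsilon> > 0 \<Longrightarrow> \<exists>\<delta>>0. \<forall>x y. \<epsilon> < dist x y \<and> dist x y < \<epsilon> + \<delta> \<longrightarrow> dist (T x) (T y) \<le> \<epsilon>"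
    using cj unfolding cjmp_contraction_def by auto
  have dle: "dist (T x) (T y) \<le> dist x y" for x y
    using ct unfolding contractive_def by (cases "x = y") (auto simp: less_imp_le)
  have dlt: "x \<noteq> y \<Longrightarrow> dist (T x) (T y) < dist x y" for x y
    using ct unfolding contractive_def by auto
  define xs where "xs n = (T ^^ n) x0" for n
  have xsS: "xs (Suc n) = T (xs n)" for n by (simp add: xs_def)
  define d where "d n = dist (xs n) (xs (Suc n))" for n
  have dS: "d (Suc n) \<le> d n" for n unfolding d_def xsS[of "Suc n"] xsS[of n] using dle
    by (metis xsS)
  have "decseq d" by (rule decseq_SucI) (use dS in auto)
  then obtain L where dL: "d \<longlonglongrightarrow> L" and Lle: "\<forall>i. L \<le> d i"
    by (rule decseq_convergent[where B=0]) (auto simp: d_def)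
  have L0: "L = 0"
  proof (rule ccontr)
    assume "L \<noteq> 0"
    moreover have "L \<ge> 0" using dL by (rule LIMSEQ_le_const) (auto simp: d_def)
    ultimately have Lp: "L > 0" by simp
    have noeq: "d n \<noteq> L" for n
    proof
      assume dn: "d n = L"
      hence "xs n \<noteq> xs (Suc n)" using Lp by (auto simp: d_def)
      hence "d (Suc n) < d n" unfolding d_def using dlt by (metis xsS)
      with dn Lle show False by (metis not_le)
    qed
    obtain \<delta> where dp: "\<delta> > 0" and dd: "\<forall>x y. L < dist x y \<and> dist x y < L + \<delta> \<longrightarrow> dist (T x) (T y) \<le> L"
      using mk[OF Lp] by blast
    have "\<forall>\<^sub>F n in sequentially. d n < L + \<delta>"
      using dL dp by (auto simp: tendsto_iff dist_real_def abs_less_iff elim!: allE[of _ \<delta>] elim: eventually_mono)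
    then obtain N where "d N < L + \<delta>" by (auto simp: eventually_sequentially)
    moreover have "L < d N" using Lle noeq[of N] by (metis order.not_eq_order_implies_strict)
    ultimately have "d (Suc N) \<le> L" using dd unfolding d_def by (metis xsS)
    with Lle noeq[of "Suc N"] show False by (metis order_antisym)
  qed
  have d0: "d \<longlonglongrightarrow> 0" using dL L0 by simp
  have "Cauchy xs"
  proof (rule metric_CauchyI)
    fix e :: real assume ep: "e > 0"
    define \<epsilon> where "\<epsilon> = e / 2"
    have ee: "\<epsilon> > 0" using ep by (simp add: \<epsilon>_def)
    obtain \<delta> where dp: "\<delta> > 0" and dd: "\<forall>x y. \<epsilon> < dist x y \<and> dist x y < \<epsilon> + \<delta> \<longrightarrow> dist (T x) (T y) \<le> \<epsilon>"
      using mk[OF ee] by blast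
    define \<delta>' where "\<delta>' = min \<delta> \<epsilon>"
    have dp': "\<delta>' > 0" using dp ee by (simp add: \<delta>'_def)
    have "\<forall>\<^sub>F n in sequentially. d n < \<delta>'"
      using d0 dp' by (auto simp: tendsto_iff dist_real_def abs_less_iff elim!: allE[of _ \<delta>'] elim: eventually_mono)
    then obtain N where N: "\<And>n. n \<ge> N \<Longrightarrow> d n < \<delta>'" by (auto simp: eventually_sequentially)
    have key: "dist (xs m) (xs (m + k)) < \<epsilon> + \<delta>'" if m: "m \<ge> N" for m k
    proof (induction k)
      case 0 thus ?case using ee dp' by simp
    next
      case (Suc k)
      have "dist (xs (Suc m)) (xs (Suc (m + k))) \<le> \<epsilon>"
      proof (cases "dist (xs m) (xs (m + k)) > \<epsilon>")
        case True
        moreover have "dist (xs m) (xs (m + k)) < \<epsilon> + \<delta>" using Suc \<delta>'_def by linarith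
        ultimately show ?thesis using dd by (simp add: xsS)
      next
        case False thus ?thesis using dle[of "xs m" "xs (m+k)"] by (simp add: xsS)
      qed
      moreover have "dist (xs m) (xs (Suc m)) < \<delta>'" using N[OF m] by (simp add: d_def)
      moreover have "dist (xs m) (xs (m + Suc k)) \<le> dist (xs m) (xs (Suc m)) + dist (xs (Suc m)) (xs (Suc (m + k)))"
        by (simp add: dist_triangle)
      ultimately show ?case by linarith
    qed
    have "\<forall>m\<ge>N. \<forall>n\<ge>N. dist (xs m) (xs n) < e"
    proof (intro allI impI)
      fix m n assume mn: "m \<ge> N" "n \<ge> N"
      have "\<epsilon> + \<delta>' \<le> e" using \<epsilon>_def \<delta>'_def by linarith
      moreover have "dist (xs m) (xs n) < \<epsilon> + \<delta>'"
      proof (cases "m \<le> n")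
        case True thus ?thesis using key[OF mn(1), of "n - m"] by simp
      next
        case False thus ?thesis using key[OF mn(2), of "m - n"] by (simp add: dist_commute)
      qed
      ultimately show "dist (xs m) (xs n) < e" by linarith
    qed
    thus "\<exists>M. \<forall>m\<ge>M. \<forall>n\<ge>M. dist (xs m) (xs n) < e" by blast
  qed
  then obtain u where u: "xs \<longlonglongrightarrow> u" using Cauchy_convergent_iff convergent_def by blast
  have "(\<lambda>n. T (xs n)) \<longlonglongrightarrow> T u"
    by (rule metric_tendsto_imp_tendsto[OF u]) (simp add: dle)
  moreover have "(\<lambda>n. T (xs n)) \<longlonglongrightarrow> u" using LIMSEQ_Suc[OF u] by (simp add: xsS)
  ultimately have "T u = u" by (rule LIMSEQ_unique)
  moreover have "xs = (\<lambda>n. (T ^^ n) x0)" by (simp add: xs_def fun_eq_iff)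
  ultimately show ?thesis using u by auto
qed

lemma picard_lemma:
  fixes T :: "'a::complete_space \<Rightarrow> 'a"
  assumes cj: "cjmp_contraction T"
  shows "picard_operator T"
proof -
  have ct: "contractive T" using cj unfolding cjmp_contraction_def by auto
  have uq: "T v = v \<Longrightarrow> T w = w \<Longrightarrow> v = w" for v w
    using ct unfolding contractive_def by (metis order.irrefl)
  obtain u where u: "T u = u" using iter_conv[OF cj] by blast
  have "(\<lambda>n. (T ^^ n) x) \<longlonglongrightarrow> u" for x
    using iter_conv[OF cj, of x] uq u by metis
  thus ?thesis unfolding picard_operator_def using u uq by blast
qed

theorem mainTheorem2:
  fixes T :: "'a::complete_space \<Rightarrow> 'a"
    and E F :: "real \<Rightarrow> real"
  assumes "compatible_pair E F"
    and "\<And>x y. T x \<noteq> T y \<Longrightarrow> F (dist (T x) (T y)) \<le> E (dist x y)"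
  shows "cjmp_contraction T \<and> picard_operator T"
  using cjmp_lemma[OF assms] picard_lemma[OF cjmp_lemma[OF assms]] by blast

end
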